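(* For all integers $1\le m<n$ there exists a full-rank $A_1\in\mathbb R^{m\times n}$ such that for all $0<p,q<\infty$: $A_1^\dagger\in\mathrm{ginv}_{\mathrm{col}(p,q)}(A_1)$ if and only if $p=2$.
   Context: Generalized inverses are taken real: $\mathcal G(A)=\{X\in\mathbb R^{n\times m}:AX=I_m\}$, $\mathrm{ginv}_\nu(A)=\arg\min_{X\in\mathcal G(A)}\|X\|_\nu$ (a set). For $M$ with columns $m_j$, $\|M\|_{\mathrm{col}(p,q)}=(\sum_j\|m_j\|_p^q)^{1/q}$ (a quasi-norm when $p<1$ or $q<1$). $A^\dagger=A^\top(AA^\top)^{-1}$. *)

theory Defs
  imports "HOL-Analysis.Analysis"
begin

text \<open>Matrices: an m x n real matrix is real^'n^'m (rows indexed by 'm).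
  Entry (i,j) of X is X $ i $ j.\<close>

definition ginv_set :: "real^'n^'m \<Rightarrow> (real^'m^'n) set" where
  "ginv_set A = {X. A ** X = mat 1}"

definition ginv :: "((real^'m^'n) \<Rightarrow> real) \<Rightarrow> real^'n^'m \<Rightarrow> (real^'m^'n) set" where
  "ginv nu A = {X \<in> ginv_set A. \<forall>Y \<in> ginv_set A. nu X \<le> nu Y}"

definition col_norm :: "real \<Rightarrow> real \<Rightarrow> real^'c^'r \<Rightarrow> real" where
  "col_norm p q M = (\<Sum>j\<in>UNIV. ((\<Sum>i\<in>UNIV. \<bar>M $ i $ j\<bar> powr p) powr (1/p)) powr q) powr (1/q)"

definition pinv :: "real^'n^'m \<Rightarrow> real^'m^'n" where
  "pinv A = transpose A ** matrix_inv (A ** transpose A)"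

end

theory Submission imports Defs begin

definition AA :: "('m \<Rightarrow> 'n) \<Rightarrow> 'n \<Rightarrow> 'm \<Rightarrow> real^'n^'m" where
  "AA f k r0 = (\<chi> i j. (if j = f i then 1 else 0) + (if i = r0 \<and> j = k then 2 else 0))"

definition QQ :: "('m \<Rightarrow> 'n) \<Rightarrow> 'n \<Rightarrow> 'm \<Rightarrow> real \<Rightarrow> real \<Rightarrow> real^'m^'n" where
  "QQ f k r0 a b = (\<chi> j i. if i = r0 then (if j = f r0 then a else if j = k then b else 0)
                         else (if j = f i then 1 else 0))"

definition DI :: "'m \<Rightarrow> real \<Rightarrow> real^'m^'m" where
  "DI r0 c = (\<chi> i i'. if i = i' then (if i = r0 then c else 1) else 0)"

definition cn :: "real \<Rightarrow> real^'c^'r \<Rightarrow> 'c \<Rightarrow> real" where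
  "cn p M j = (\<Sum>i\<in>UNIV. \<bar>M $ i $ j\<bar> powr p) powr (1/p)"

lemma col_norm_cn: "col_norm p q M = (\<Sum>j\<in>UNIV. cn p M j powr q) powr (1/q)"
  by (simp add: col_norm_def cn_def)

lemma sum_split_A:
  fixes f :: "'m::finite \<Rightarrow> 'n::finite"
  shows "(\<Sum>j\<in>UNIV. ((if j = f i then 1 else 0) + (if i = r0 \<and> j = k then 2 else 0)) * (g j::real))
     = g (f i) + (if i = r0 then 2 * g k else 0)"
  by (simp add: distrib_right sum.distrib if_distrib[where f="\<lambda>x. x * _"] cong: if_cong)

lemma AQ_entry:
  fixes f :: "'m::finite \<Rightarrow> 'n::finite"
  shows "(AA f k r0 ** B) $ i $ i' = B $ (f i) $ i' + (if i = r0 then 2 * B $ k $ i' else 0)"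
  unfolding matrix_matrix_mult_def AA_def
  using sum_split_A[of f i r0 k "\<lambda>j. B $ j $ i'"] by simp

lemma AQ:
  fixes f :: "'m::finite \<Rightarrow> 'n::finite"
  assumes "inj f" "k \<notin> range f" "a + 2*b = 1"
  shows "AA f k r0 ** QQ f k r0 a b = mat 1"
proof -
  have nk: "\<And>x. f x \<noteq> k" "\<And>x. k \<noteq> f x" using assms(2) by auto
  show ?thesis
    using assms(3) nk
    by (auto simp: vec_eq_iff AQ_entry QQ_def mat_def inj_eq[OF assms(1)])
qed

lemma AAT:
  fixes f :: "'m::finite \<Rightarrow> 'n::finite"
  assumes "inj f" "k \<notin> range f"
  shows "AA f k r0 ** transpose (AA f k r0) = DI r0 5"
proof -
  have nk: "\<And>x. f x \<noteq> k" "\<And>x. k \<noteq> f x" using assms(2) by auto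
  show ?thesis
    apply (simp only: vec_eq_iff AQ_entry)
    using nk by (auto simp: transpose_def AA_def DI_def inj_eq[OF assms(1)])
qed

lemma DI_mult: "DI r0 c ** DI r0 d = DI r0 (c * d)"
  by (auto simp: vec_eq_iff matrix_matrix_mult_def DI_def if_distrib[where f="\<lambda>x. x * _"] cong: if_cong)

lemma minv_unique:
  fixes D :: "real^'n^'n"
  assumes "D ** E = mat 1" "E ** D = mat 1"
  shows "matrix_inv D = E"
proof -
  have ex: "\<exists>E'. D ** E' = mat 1 \<and> E' ** D = mat 1" using assms by blast
  then have h: "D ** matrix_inv D = mat 1 \<and> matrix_inv D ** D = mat 1"
    unfolding matrix_inv_def by (rule someI_ex)
  have "matrix_inv D = matrix_inv D ** (D ** E)" using assms by (simp add: matrix_mul_rid)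
  also have "\<dots> = (matrix_inv D ** D) ** E" by (simp add: matrix_mul_assoc)
  also have "\<dots> = E" using h by (simp add: matrix_mul_lid)
  finally show ?thesis .
qed

lemma DI_one: "DI r0 1 = mat 1"
  by (auto simp: vec_eq_iff DI_def mat_def)

lemma pinv_AA:
  fixes f :: "'m::finite \<Rightarrow> 'n::finite"
  assumes "inj f" "k \<notin> range f"
  shows "pinv (AA f k r0) = QQ f k r0 (1/5) (2/5)"
proof -
  have nk: "\<And>x. f x \<noteq> k" "\<And>x. k \<noteq> f x" using assms(2) by auto
  have mi: "matrix_inv (DI r0 5) = DI r0 (1/5)"
    by (rule minv_unique) (simp_all add: DI_mult DI_one)
  show ?thesis
    unfolding pinv_def AAT[OF assms] mi
    using nk
    by (auto simp: vec_eq_iff matrix_matrix_mult_def transpose_def AA_def DI_def QQ_def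
        if_distrib[where f="\<lambda>x. _ * x"] cong: if_cong)
qed

lemma QQ_col_other:
  fixes f :: "'m::finite \<Rightarrow> 'n::finite"
  assumes "i \<noteq> r0" "p > 0"
  shows "cn p (QQ f k r0 a b) i = 1"
proof -
  have "(\<Sum>j\<in>UNIV. \<bar>QQ f k r0 a b $ j $ i\<bar> powr p) = (\<Sum>j\<in>UNIV. if j = f i then 1 else 0)"
    by (rule sum.cong) (use assms in \<open>auto simp: QQ_def\<close>)
  then show ?thesis by (simp add: cn_def)
qed

lemma QQ_col_r0:
  fixes f :: "'m::finite \<Rightarrow> 'n::finite"
  assumes "k \<notin> range f" "p > 0"
  shows "cn p (QQ f k r0 a b) r0 = (\<bar>a\<bar> powr p + \<bar>b\<bar> powr p) powr (1/p)"
proof -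
  have nk: "f r0 \<noteq> k" using assms(1) by auto
  have "(\<Sum>j\<in>UNIV. \<bar>QQ f k r0 a b $ j $ r0\<bar> powr p)
      = (\<Sum>j\<in>UNIV. (if j = f r0 then \<bar>a\<bar> powr p else 0) + (if j = k then \<bar>b\<bar> powr p else 0))"
    by (rule sum.cong) (use nk assms in \<open>auto simp: QQ_def\<close>)
  also have "\<dots> = \<bar>a\<bar> powr p + \<bar>b\<bar> powr p" by (simp add: sum.distrib)
  finally show ?thesis by (simp add: cn_def)
qed

lemma cn_nonneg: "0 \<le> cn p M j"
  by (simp add: cn_def)

lemma col_norm_le:
  assumes "\<And>j. cn p X j \<le> cn p Y j" "q > 0"
  shows "col_norm p q X \<le> col_norm p q Y"
  unfolding col_norm_cn
  apply (rule powr_mono2)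
  using assms apply (simp_all add: sum_nonneg)
  apply (rule sum_mono)
  apply (rule powr_mono2)
  using assms by (auto simp: cn_nonneg)

lemma col_norm_less:
  fixes X Y :: "real^'c::finite^'r::finite"
  assumes "\<And>j. j \<noteq> r \<Longrightarrow> cn p X j = cn p Y j" "cn p X r < cn p Y r" "q > 0"
  shows "col_norm p q X < col_norm p q Y"
proof -
  have s: "\<And>Z::real^'c^'r. (\<Sum>j\<in>UNIV. cn p Z j powr q) = cn p Z r powr q + (\<Sum>j\<in>UNIV-{r}. cn p Z j powr q)"
    by (simp add: sum.remove)
  have e: "(\<Sum>j\<in>UNIV-{r}. cn p X j powr q) = (\<Sum>j\<in>UNIV-{r}. cn p Y j powr q)"
    by (rule sum.cong) (use assms in auto)
  have l: "cn p X r powr q < cn p Y r powr q"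
    by (rule powr_less_mono2) (use assms cn_nonneg in auto)
  have "(\<Sum>j\<in>UNIV. cn p X j powr q) < (\<Sum>j\<in>UNIV. cn p Y j powr q)"
    unfolding s e using l by simp
  then show ?thesis unfolding col_norm_cn
    by (intro powr_less_mono2) (use assms in \<open>auto intro: sum_nonneg\<close>)
qed

lemma perturb:
  fixes p :: real
  assumes "p > 0" "p \<noteq> 2"
  shows "\<exists>a b. 0 < a \<and> 0 < b \<and> a + 2*b = 1 \<and> a powr p + b powr p < (1/5) powr p + (2/5) powr p" (is "?E")
proof -
  define g where "g t = (1/5 - 2*t) powr p + (2/5 + t) powr p" for t :: real
  define l where "l = p * (1/5) powr (p-1) * (-2) + p * (2/5) powr (p-1)"
  have d1: "DERIV (\<lambda>t. (1/5 - 2*t) powr p) 0 :> p * (1/5 - 2*0) powr (p-1) * (-2)"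
    by (rule DERIV_chain2[where f="\<lambda>z. z powr p"]) (auto intro!: has_real_derivative_powr derivative_eq_intros)
  have d2: "DERIV (\<lambda>t. (2/5 + t) powr p) 0 :> p * (2/5 + 0) powr (p-1) * 1"
    by (rule DERIV_chain2[where f="\<lambda>z. z powr p"]) (auto intro!: has_real_derivative_powr derivative_eq_intros)
  have dg: "DERIV g 0 :> l"
    unfolding g_def l_def using DERIV_add[OF d1 d2] by simp
  have l_eq: "l = p * (1/5) powr (p-1) * (2 powr (p-1) - 2)"
  proof -
    have "(2/5::real) powr (p-1) = 2 powr (p-1) * (1/5) powr (p-1)"
      using powr_mult[of 2 "1/5" "p-1"] by simp
    then show ?thesis unfolding l_def by (simp add: algebra_simps)
  qed
  have pos: "0 < p * (1/5::real) powr (p-1)" using assms by simp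
  have ok: "\<And>t. \<bar>t\<bar> < 1/20 \<Longrightarrow> g t < g 0 \<Longrightarrow> ?E"
  proof -
    fix t :: real assume t: "\<bar>t\<bar> < 1/20" "g t < g 0"
    show ?E
      by (rule exI[of _ "1/5 - 2*t"], rule exI[of _ "2/5 + t"]) (use t in \<open>auto simp: g_def\<close>)
  qed
  show ?thesis
  proof (cases "p < 2")
    case True
    then have "(2::real) powr (p-1) < 2 powr 1" by (intro powr_less_mono) auto
    then have "l < 0" using pos unfolding l_eq by (simp add: mult_pos_neg)
    from DERIV_neg_dec_right[OF dg this] obtain d where d: "d > 0" "\<And>h. h > 0 \<Longrightarrow> h < d \<Longrightarrow> g 0 > g (0 + h)" by blast
    define h where "h = min (d/2) (1/40)"
    have "h > 0" "h < d" "\<bar>h\<bar> < 1/20" using d by (auto simp: h_def)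
    then show ?thesis using ok[of h] d(2)[of h] by simp
  next
    case False
    then have "(2::real) powr 1 < 2 powr (p-1)" using assms by (intro powr_less_mono) auto
    then have "l > 0" using pos unfolding l_eq by simp
    from DERIV_pos_inc_left[OF dg this] obtain d where d: "d > 0" "\<And>h. h > 0 \<Longrightarrow> h < d \<Longrightarrow> g (0 - h) < g 0" by blast
    define h where "h = min (d/2) (1/40)"
    have "h > 0" "h < d" "\<bar>-h\<bar> < 1/20" using d by (auto simp: h_def)
    then show ?thesis using ok[of "-h"] d(2)[of h] by simp
  qed
qed

lemma aux5:
  fixes a b :: real
  assumes "a + 2*b = 1"
  shows "1/5 \<le> a^2 + b^2"
proof -
  have a: "a = 1 - 2*b" using assms by simp
  have "a^2 + b^2 = 1/5 + 5*(b - 2/5)^2" unfolding a by (simp add: power2_eq_square algebra_simps)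
  then show ?thesis by simp
qed

lemma lower2:
  fixes f :: "'m::finite \<Rightarrow> 'n::finite"
  assumes "inj f" "k \<notin> range f" "AA f k r0 ** Y = mat 1"
  shows "cn 2 (QQ f k r0 (1/5) (2/5)) j \<le> cn 2 Y j"
proof -
  have nk: "f r0 \<noteq> k" using assms(2) by auto
  have e: "Y $ (f j) $ j + (if j = r0 then 2 * Y $ k $ j else 0) = 1"
    using arg_cong[OF assms(3), of "\<lambda>M. M $ j $ j"] by (simp add: AQ_entry mat_def)
  have sq: "\<And>x::real. \<bar>x\<bar> powr 2 = x^2" by simp
  let ?S = "(\<Sum>i\<in>UNIV. \<bar>Y $ i $ j\<bar> powr 2)"
  show ?thesis
  proof (cases "j = r0")
    case False
    have "1 \<le> ?S"
    proof -
      have "\<bar>Y $ (f j) $ j\<bar> powr 2 \<le> ?S" by (rule member_le_sum) auto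
      then show ?thesis using e False by simp
    qed
    then have "(1::real) powr (1/2) \<le> ?S powr (1/2)" by (intro powr_mono2) auto
    then have "1 \<le> cn 2 Y j" by (simp add: cn_def)
    moreover have "cn 2 (QQ f k r0 (1/5) (2/5)) j = 1" by (rule QQ_col_other[OF False]) simp
    ultimately show ?thesis by simp
  next
    case True
    have "(\<Sum>i\<in>{f r0, k}. \<bar>Y $ i $ j\<bar> powr 2) \<le> ?S" by (rule sum_mono2) auto
    then have "(Y $ (f r0) $ j)^2 + (Y $ k $ j)^2 \<le> ?S" using nk by simp
    moreover have "(Y $ (f r0) $ j) + 2 * (Y $ k $ j) = 1" using e True by simp
    ultimately have "1/5 \<le> ?S"
      using aux5 by (meson order_trans)
    then have "(1/5::real) powr (1/2) \<le> ?S powr (1/2)" by (intro powr_mono2) auto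
    moreover have "cn 2 (QQ f k r0 (1/5) (2/5)) j = (1/5) powr (1/2)"
      using True QQ_col_r0[OF assms(2), of 2 r0 "1/5" "2/5"] by (simp add: power2_eq_square)
    ultimately show ?thesis by (simp add: cn_def)
  qed
qed

theorem theorem4:
  assumes "CARD('m::finite) < CARD('n::finite)"
  shows "\<exists>A :: real^'n^'m. rank A = CARD('m) \<and>
           (\<forall>p q :: real. 0 < p \<longrightarrow> 0 < q \<longrightarrow>
              (pinv A \<in> ginv (col_norm p q) A \<longleftrightarrow> p = 2))"
proof -
  obtain f :: "'m \<Rightarrow> 'n" where "inj_on f UNIV"
    using card_le_inj[of "UNIV::'m set" "UNIV::'n set"] assms by auto
  then have inj: "inj f" by simp
  have "card (range f) = CARD('m)" using inj by (simp add: card_image)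
  then have "range f \<noteq> UNIV" using assms by auto
  then obtain k where k: "k \<notin> range f" by auto
  define r0 :: 'm where "r0 = undefined"
  define A where "A = AA f k r0"
  define P where "P = QQ f k r0 (1/5) (2/5)"
  have AP: "A ** P = mat 1" unfolding A_def P_def by (rule AQ[OF inj k]) simp
  have pinvA: "pinv A = P" unfolding A_def P_def by (rule pinv_AA[OF inj k])
  have rk: "rank A = CARD('m)"
  proof -
    have "rank A \<le> CARD('m)" using rank_bound[of A] by simp
    moreover have "CARD('m) \<le> rank A"
      using rank_mul_le_left[of A P] AP rank_I by (metis)
    ultimately show ?thesis by simp
  qed
  have main: "pinv A \<in> ginv (col_norm p q) A \<longleftrightarrow> p = 2" if pq: "0 < p" "0 < q" for p q :: real
  proof
    assume g: "pinv A \<in> ginv (col_norm p q) A"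
    show "p = 2"
    proof (rule ccontr)
      assume "p \<noteq> 2"
      from perturb[OF pq(1) this] obtain a b where ab: "0 < a" "0 < b" "a + 2*b = 1"
        "a powr p + b powr p < (1/5) powr p + (2/5) powr p" by blast
      define Y where "Y = QQ f k r0 a b"
      have "Y \<in> ginv_set A" unfolding Y_def A_def ginv_set_def using AQ[OF inj k ab(3)] by simp
      then have le: "col_norm p q P \<le> col_norm p q Y" using g pinvA unfolding ginv_def by auto
      have "col_norm p q Y < col_norm p q P"
      proof (rule col_norm_less[where r=r0])
        show "\<And>j. j \<noteq> r0 \<Longrightarrow> cn p Y j = cn p P j"
          unfolding Y_def P_def using QQ_col_other pq by metis
        have "(a powr p + b powr p) powr (1/p) < ((1/5) powr p + (2/5) powr p) powr (1/p)"
          by (rule powr_less_mono2) (use pq ab in auto)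
        then show "cn p Y r0 < cn p P r0"
          unfolding Y_def P_def using QQ_col_r0[OF k pq(1)] ab by simp
        show "0 < q" by fact
      qed
      then show False using le by simp
    qed
  next
    assume p2: "p = 2"
    have "P \<in> ginv_set A" using AP by (simp add: ginv_set_def)
    moreover have "\<forall>Y \<in> ginv_set A. col_norm p q P \<le> col_norm p q Y"
    proof
      fix Y assume "Y \<in> ginv_set A"
      then have "AA f k r0 ** Y = mat 1" by (simp add: ginv_set_def A_def)
      then show "col_norm p q P \<le> col_norm p q Y"
        unfolding p2 P_def by (intro col_norm_le lower2[OF inj k] pq(2))
    qed
    ultimately show "pinv A \<in> ginv (col_norm p q) A" using pinvA by (simp add: ginv_def)
  qed
  show ?thesis using rk main by blast
qed

end
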